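(* Let $R$ be a commutative Noetherian semi-local ring and $n\ge 1$. A map $(-)^*:M_n(R)\to M_n(R)$ makes $M_n(R)$ an $R^*$-algebra if and only if there exist an invertible matrix $C\in M_n(R)$ and an element $a\in R$ such that (1) $C^T=aC$, (2) $a^2=1$, and (3) $A^*=C^{-1}A^TC$ for all $A\in M_n(R)$.
   Context: An $R$-algebra $E$ (possibly noncommutative) is an $R^*$-algebra if there is a map of abelian groups $(-)^*:E\to E$ with $(ab)^*=b^*a^*$, $1_E^*=1_E$, $(ra)^*=ra^*$ for $r\in R$, and $a^{**}=a$ for all $a,b\in E$. $A^T$ denotes the transpose. *)

theory Defs
  imports "HOL-Analysis.Analysis"
begin

definition is_ideal :: "'a::comm_ring_1 set \<Rightarrow> bool" where
  "is_ideal I \<longleftrightarrow> 0 \<in> I \<and> (\<forall>x\<in>I. \<forall>y\<in>I. x + y \<in> I) \<and> (\<forall>r. \<forall>x\<in>I. r * x \<in> I)"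

definition noetherian_cring :: "'a::comm_ring_1 itself \<Rightarrow> bool" where
  "noetherian_cring _ \<longleftrightarrow>
     (\<forall>I :: nat \<Rightarrow> 'a set. (\<forall>k. is_ideal (I k) \<and> I k \<subseteq> I (Suc k))
        \<longrightarrow> (\<exists>N. \<forall>m\<ge>N. I m = I N))"

definition maximal_ideal :: "'a::comm_ring_1 set \<Rightarrow> bool" where
  "maximal_ideal I \<longleftrightarrow> is_ideal I \<and> I \<noteq> UNIV \<and>
     (\<forall>J. is_ideal J \<and> I \<subseteq> J \<longrightarrow> J = I \<or> J = UNIV)"

definition semilocal_cring :: "'a::comm_ring_1 itself \<Rightarrow> bool" where
  "semilocal_cring _ \<longleftrightarrow> finite {I :: 'a set. maximal_ideal I}"

definition mscale :: "'a::semiring_1 \<Rightarrow> 'a^'n^'m \<Rightarrow> 'a^'n^'m" where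
  "mscale r A = (\<chi> i j. r * A $ i $ j)"

definition is_star_algebra_map :: "('a::comm_ring_1^'n^'n \<Rightarrow> 'a^'n^'n) \<Rightarrow> bool" where
  "is_star_algebra_map s \<longleftrightarrow>
     (\<forall>A B. s (A + B) = s A + s B) \<and>
     (\<forall>A B. s (A ** B) = s B ** s A) \<and>
     s (mat 1) = mat 1 \<and>
     (\<forall>r A. s (mscale r A) = mscale r (s A)) \<and>
     (\<forall>A. s (s A) = A)"

end

theory Submission
  imports Defs
begin


lemma ideal_add: "is_ideal I \<Longrightarrow> x \<in> I \<Longrightarrow> y \<in> I \<Longrightarrow> x + y \<in> I"
  by (simp add: is_ideal_def)
lemma ideal_lmult: "is_ideal I \<Longrightarrow> x \<in> I \<Longrightarrow> r * x \<in> I"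
  by (simp add: is_ideal_def)
lemma ideal_rmult: "is_ideal I \<Longrightarrow> x \<in> I \<Longrightarrow> x * r \<in> I"
  by (metis ideal_lmult mult.commute)
lemma ideal_zero: "is_ideal I \<Longrightarrow> 0 \<in> I"
  by (simp add: is_ideal_def)
lemma ideal_diff: "is_ideal I \<Longrightarrow> x \<in> I \<Longrightarrow> y \<in> I \<Longrightarrow> x - y \<in> I"
  using ideal_add[of I x "(-1)*y"] ideal_lmult[of I y "-1"] by simp
lemma ideal_sum: assumes "is_ideal I" "finite S" "\<And>x. x \<in> S \<Longrightarrow> f x \<in> I" shows "sum f S \<in> I"
  using assms(2,3) by (induction S rule: finite_induct) (auto simp: ideal_zero[OF assms(1)] ideal_add[OF assms(1)])
lemma ideal_one: "is_ideal I \<Longrightarrow> 1 \<in> I \<Longrightarrow> I = UNIV"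
  using ideal_lmult[of I 1] by auto

lemma max_one: "maximal_ideal m \<Longrightarrow> (1::'a::comm_ring_1) \<notin> m"
  using ideal_one maximal_ideal_def by blast

lemma max_prime:
  fixes a b :: "'a::comm_ring_1"
  assumes m: "maximal_ideal m" and ab: "a * b \<in> m" and a: "a \<notin> m"
  shows "b \<in> m"
proof -
  have im: "is_ideal m" using m maximal_ideal_def by blast
  define J where "J = {x + r * a | x r. x \<in> m}"
  have "is_ideal J" unfolding is_ideal_def J_def
  proof (intro conjI ballI allI)
    show "0 \<in> {x + r * a |x r. x \<in> m}" using ideal_zero[OF im] by (intro CollectI exI[of _ 0]) auto
  next
    fix x y assume "x \<in> {x + r * a |x r. x \<in> m}" "y \<in> {x + r * a |x r. x \<in> m}"
    then obtain x1 r1 x2 r2 where "x = x1 + r1 * a" "y = x2 + r2 * a" "x1 \<in> m" "x2 \<in> m" by blast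
    then show "x + y \<in> {x + r * a |x r. x \<in> m}"
      by (intro CollectI exI[of _ "x1 + x2"] exI[of _ "r1 + r2"]) (auto simp: ideal_add[OF im] algebra_simps)
  next
    fix r x assume "x \<in> {x + r * a |x r. x \<in> m}"
    then obtain x1 r1 where "x = x1 + r1 * a" "x1 \<in> m" by blast
    then show "r * x \<in> {x + r * a |x r. x \<in> m}"
      by (intro CollectI exI[of _ "r * x1"] exI[of _ "r * r1"]) (auto simp: ideal_lmult[OF im] algebra_simps)
  qed
  moreover have "m \<subseteq> J" unfolding J_def by (force intro: exI[of _ 0])
  moreover have "a \<in> J" unfolding J_def using ideal_zero[OF im] by (force intro: exI[of _ 1])
  ultimately have "J = UNIV" using m a unfolding maximal_ideal_def by blast
  then obtain x r where "1 = x + r * a" "x \<in> m" unfolding J_def by blast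
  then have "b = b * x + r * (a * b)" by (metis mult.commute mult.left_commute mult_1 distrib_left)
  then show ?thesis using ideal_add[OF im] ideal_lmult[OF im] ab \<open>x \<in> m\<close> by metis
qed

lemma max_prod_notin:
  assumes m: "maximal_ideal m" and "finite S" and "\<And>x. x \<in> S \<Longrightarrow> (f x :: 'a::comm_ring_1) \<notin> m"
  shows "prod f S \<notin> m"
  using assms(2,3)
proof (induction S rule: finite_induct)
  case empty then show ?case using max_one[OF m] by simp
next
  case (insert x F) then show ?case using max_prime[OF m] by auto
qed

lemma unit_of_no_max:
  fixes c :: "'a::comm_ring_1"
  assumes "\<And>m. maximal_ideal m \<Longrightarrow> c \<notin> m"
  shows "\<exists>d. c * d = 1"
proof (rule ccontr)
  assume nu: "\<not> (\<exists>d. c * d = 1)"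
  define A where "A = {I. is_ideal I \<and> c \<in> I \<and> (1::'a) \<notin> I}"
  have "is_ideal {r * c | r. True}" unfolding is_ideal_def
  proof (intro conjI ballI allI)
    show "0 \<in> {r * c |r. True}" by (intro CollectI exI[of _ 0]) simp
  next
    fix x y assume "x \<in> {r * c |r. True}" "y \<in> {r * c |r. True}"
    then obtain r s where "x = r * c" "y = s * c" by blast
    then show "x + y \<in> {r * c |r. True}" by (intro CollectI exI[of _ "r + s"]) (simp add: distrib_right)
  next
    fix t x assume "x \<in> {r * c |r. True}"
    then obtain r where "x = r * c" by blast
    then show "t * x \<in> {r * c |r. True}" by (intro CollectI exI[of _ "t * r"]) (simp add: mult.assoc)
  qed
  moreover have "c \<in> {r * c |r. True}" by (intro CollectI exI[of _ 1]) simp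
  moreover have "1 \<notin> {r * c |r. True}" using nu by (auto simp: mult.commute)
  ultimately have "{r * c | r. True} \<in> A" unfolding A_def by blast
  then have "A \<noteq> {}" by blast
  moreover have "\<Union>C \<in> A" if "C \<noteq> {}" "subset.chain A C" for C
  proof -
    have CA: "C \<subseteq> A" and ch: "\<And>X Y. X \<in> C \<Longrightarrow> Y \<in> C \<Longrightarrow> X \<subseteq> Y \<or> Y \<subseteq> X"
      using that unfolding subset.chain_def by auto
    have "is_ideal (\<Union>C)" unfolding is_ideal_def
    proof (intro conjI ballI allI)
      show "0 \<in> \<Union>C" using that(1) CA unfolding A_def is_ideal_def by blast
    next
      fix x y assume "x \<in> \<Union>C" "y \<in> \<Union>C"
      then obtain X Y where "x \<in> X" "y \<in> Y" "X \<in> C" "Y \<in> C" by blast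
      then show "x + y \<in> \<Union>C" using ch[of X Y] CA unfolding A_def is_ideal_def by blast
    next
      fix r x assume "x \<in> \<Union>C"
      then show "r * x \<in> \<Union>C" using CA unfolding A_def is_ideal_def by blast
    qed
    moreover have "c \<in> \<Union>C" using that(1) CA unfolding A_def by blast
    moreover have "1 \<notin> \<Union>C" using CA unfolding A_def by blast
    ultimately show ?thesis unfolding A_def by blast
  qed
  ultimately obtain M where M: "M \<in> A" "\<And>X. X \<in> A \<Longrightarrow> M \<subseteq> X \<Longrightarrow> X = M"
    using subset_Zorn_nonempty[of A] by blast
  have "maximal_ideal M" unfolding maximal_ideal_def
  proof (intro conjI allI impI)
    show "is_ideal M" using M(1) A_def by blast
    show "M \<noteq> UNIV" using M(1) A_def by blast
  next
    fix J assume J: "is_ideal J \<and> M \<subseteq> J"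
    show "J = M \<or> J = UNIV"
    proof (cases "1 \<in> J")
      case True then show ?thesis using ideal_one J by blast
    next
      case False then have "J \<in> A" using J M(1) unfolding A_def by blast
      then show ?thesis using M(2) J by blast
    qed
  qed
  then show False using assms M(1) A_def by blast
qed

lemma sep:
  fixes m :: "'a::comm_ring_1 set"
  assumes fin: "finite {I::'a set. maximal_ideal I}" and m: "maximal_ideal m"
  shows "\<exists>t. t \<notin> m \<and> (\<forall>m'. maximal_ideal m' \<and> m' \<noteq> m \<longrightarrow> t \<in> m')"
proof -
  define MS where "MS = {I::'a set. maximal_ideal I}"
  have "\<forall>m'\<in>MS - {m}. \<exists>s. s \<in> m' \<and> s \<notin> m"
  proof
    fix m' assume "m' \<in> MS - {m}"
    then have m': "maximal_ideal m'" "m' \<noteq> m" unfolding MS_def by auto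
    show "\<exists>s. s \<in> m' \<and> s \<notin> m"
    proof (rule ccontr)
      assume "\<not> ?thesis"
      then have "m' \<subseteq> m" by blast
      then show False using m' m unfolding maximal_ideal_def by blast
    qed
  qed
  then obtain s where s: "\<And>m'. m' \<in> MS - {m} \<Longrightarrow> s m' \<in> m' \<and> s m' \<notin> m" by metis
  define t where "t = prod s (MS - {m})"
  have "t \<notin> m" unfolding t_def using max_prod_notin[OF m] fin s unfolding MS_def by blast
  moreover have "t \<in> m'" if "maximal_ideal m'" "m' \<noteq> m" for m'
  proof -
    have "m' \<in> MS - {m}" using that MS_def by auto
    then have "t = s m' * prod s (MS - {m} - {m'})" unfolding t_def
      using fin MS_def by (metis finite_Diff prod.remove)
    then show ?thesis using s[OF \<open>m' \<in> MS - {m}\<close>] ideal_rmult that(1) maximal_ideal_def by metis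
  qed
  ultimately show ?thesis by blast
qed

lemma key_unit:
  fixes G :: "'a::comm_ring_1^'n::finite^'n"
  assumes fin: "finite {I::'a set. maximal_ideal I}"
    and ent: "\<And>m. maximal_ideal m \<Longrightarrow> \<exists>k l. G$k$l \<notin> m"
  shows "\<exists>y u :: 'a^'n. (\<Sum>k\<in>UNIV. y$k * (G *v u)$k) = 1"
proof -
  define MS where "MS = {I::'a set. maximal_ideal I}"
  have "\<forall>m::'a set. \<exists>t. maximal_ideal m \<longrightarrow> t \<notin> m \<and> (\<forall>m'. maximal_ideal m' \<and> m' \<noteq> m \<longrightarrow> t \<in> m')"
    using sep[OF fin] by blast
  then obtain t where t: "\<And>m::'a set. maximal_ideal m \<Longrightarrow> t m \<notin> m \<and> (\<forall>m'. maximal_ideal m' \<and> m' \<noteq> m \<longrightarrow> t m \<in> m')"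
    by metis
  have "\<forall>m::'a set. \<exists>k l. maximal_ideal m \<longrightarrow> G$k$l \<notin> m" using ent by blast
  then obtain kk ll where kl: "\<And>m::'a set. maximal_ideal m \<Longrightarrow> G$(kk m)$(ll m) \<notin> m"
    by metis
  define y0 :: "'a^'n" where "y0 = (\<chi> k. \<Sum>m\<in>MS. if kk m = k then t m else 0)"
  define u0 :: "'a^'n" where "u0 = (\<chi> l. \<Sum>m\<in>MS. if ll m = l then t m else 0)"
  define f where "f m m' = t m * t m' * G$(kk m)$(ll m')" for m m'
  have X: "(G *v u0)$k = (\<Sum>m'\<in>MS. t m' * G$k$(ll m'))" for k
  proof -
    have "(G *v u0)$k = (\<Sum>l\<in>UNIV. G$k$l * (\<Sum>m\<in>MS. if ll m = l then t m else 0))"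
      by (simp add: matrix_vector_mult_def u0_def)
    also have "\<dots> = (\<Sum>l\<in>UNIV. \<Sum>m\<in>MS. if ll m = l then t m * G$k$l else 0)"
      by (simp add: sum_distrib_left if_distrib mult.commute cong: if_cong)
    also have "\<dots> = (\<Sum>m\<in>MS. \<Sum>l\<in>UNIV. if ll m = l then t m * G$k$l else 0)"
      by (rule sum.swap)
    also have "\<dots> = (\<Sum>m'\<in>MS. t m' * G$k$(ll m'))"
      by simp
    finally show ?thesis .
  qed
  define c where "c = (\<Sum>k\<in>UNIV. y0$k * (G *v u0)$k)"
  have c: "c = (\<Sum>m\<in>MS. \<Sum>m'\<in>MS. f m m')"
  proof -
    have "c = (\<Sum>k\<in>UNIV. (\<Sum>m\<in>MS. if kk m = k then t m else 0) * (G *v u0)$k)"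
      by (simp add: c_def y0_def)
    also have "\<dots> = (\<Sum>k\<in>UNIV. \<Sum>m\<in>MS. if kk m = k then t m * (G *v u0)$k else 0)"
      by (auto simp: sum_distrib_right intro!: sum.cong)
    also have "\<dots> = (\<Sum>m\<in>MS. \<Sum>k\<in>UNIV. if kk m = k then t m * (G *v u0)$k else 0)"
      by (rule sum.swap)
    also have "\<dots> = (\<Sum>m\<in>MS. t m * (G *v u0)$(kk m))"
      by simp
    also have "\<dots> = (\<Sum>m\<in>MS. \<Sum>m'\<in>MS. f m m')"
      by (simp add: X f_def sum_distrib_left mult.assoc mult.left_commute)
    finally show ?thesis .
  qed
  have cnot: "c \<notin> m0" if m0: "maximal_ideal m0" for m0
  proof
    assume cm: "c \<in> m0"
    have im: "is_ideal m0" using m0 maximal_ideal_def by blast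
    have m0M: "m0 \<in> MS" using m0 MS_def by simp
    have finMS: "finite MS" using fin MS_def by simp
    have tin: "t m \<in> m0" if "m \<in> MS" "m \<noteq> m0" for m
      using t that m0 MS_def by auto
    have r1: "(\<Sum>m\<in>MS - {m0}. \<Sum>m'\<in>MS. f m m') \<in> m0"
      by (rule ideal_sum[OF im]) (use finMS tin im in \<open>auto simp: f_def mult.assoc intro!: ideal_sum ideal_rmult\<close>)
    have r2: "(\<Sum>m'\<in>MS - {m0}. f m0 m') \<in> m0"
      by (rule ideal_sum[OF im]) (use finMS tin im in \<open>auto simp: f_def mult.commute mult.left_commute intro!: ideal_rmult\<close>)
    have "c = (f m0 m0 + (\<Sum>m'\<in>MS - {m0}. f m0 m')) + (\<Sum>m\<in>MS - {m0}. \<Sum>m'\<in>MS. f m m')"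
    proof -
      have e1: "(\<Sum>m\<in>MS. \<Sum>m'\<in>MS. f m m') = (\<Sum>m'\<in>MS. f m0 m') + (\<Sum>m\<in>MS - {m0}. \<Sum>m'\<in>MS. f m m')"
        by (rule sum.remove[OF finMS m0M])
      have e2: "(\<Sum>m'\<in>MS. f m0 m') = f m0 m0 + (\<Sum>m'\<in>MS - {m0}. f m0 m')"
        by (rule sum.remove[OF finMS m0M])
      show ?thesis by (simp only: c e1 e2)
    qed
    then have "f m0 m0 = c - (\<Sum>m\<in>MS - {m0}. \<Sum>m'\<in>MS. f m m') - (\<Sum>m'\<in>MS - {m0}. f m0 m')"
      by (simp add: algebra_simps)
    then have "f m0 m0 \<in> m0" using cm r1 r2 ideal_diff[OF im] by metis
    then show False unfolding f_def using max_prime[OF m0] t[OF m0] kl[OF m0] by metis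
  qed
  obtain d where d: "c * d = 1" using unit_of_no_max[of c] cnot by blast
  define y :: "'a^'n" where "y = (\<chi> k. d * y0$k)"
  have "(\<Sum>k\<in>UNIV. y$k * (G *v u0)$k) = d * c"
    by (simp add: y_def c_def sum_distrib_left mult.assoc)
  then show ?thesis using d by (metis mult.commute)
qed



lemma ite01_mult [simp]: "(if P then 1 else 0) * x = (if P then x else (0::'a::semiring_1))"
  "x * (if P then 1 else 0) = (if P then x else (0::'a::semiring_1))" by simp_all

lemma conj_ite: "(if P \<and> Q then x else y) = (if P then if Q then x else y else y)" by simp


definition Emat :: "'n::finite \<Rightarrow> 'n \<Rightarrow> 'a::comm_ring_1^'n^'n" where
  "Emat i j = (\<chi> k l. if k = i \<and> l = j then 1 else 0)"

lemma mult_E_entry: "((M::'a::comm_ring_1^'n::finite^'n) ** Emat i j)$k$l = (if l = j then M$k$i else 0)"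
  by (cases "l = j") (simp_all add: matrix_matrix_mult_def Emat_def)

lemma E_mult_entry: "(Emat i j ** (M::'a::comm_ring_1^'n::finite^'n))$k$l = (if k = i then M$j$l else 0)"
  by (cases "k = i") (simp_all add: matrix_matrix_mult_def Emat_def)

lemma E_E: "Emat i j ** Emat k l = (if j = k then Emat i l else (0::'a::comm_ring_1^'n::finite^'n))"
  by (auto simp: vec_eq_iff mult_E_entry) (auto simp: Emat_def)

lemma mat1_E: "(mat 1 :: 'a::comm_ring_1^'n::finite^'n) = (\<Sum>i\<in>UNIV. Emat i i)"
  by (auto simp: vec_eq_iff mat_def Emat_def conj_ite)

lemma decomp: "(A :: 'a::comm_ring_1^'n::finite^'n) = (\<Sum>i\<in>UNIV. \<Sum>j\<in>UNIV. mscale (A$i$j) (Emat i j))"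
proof -
  have "(\<Sum>i\<in>UNIV. \<Sum>j\<in>UNIV. mscale (A$i$j) (Emat i j)) $ k $ l = A$k$l" for k l
  proof -
    have "(\<Sum>i\<in>UNIV. \<Sum>j\<in>UNIV. mscale (A$i$j) (Emat i j)) $ k $ l
        = (\<Sum>i\<in>UNIV. \<Sum>j\<in>UNIV. if k = i then if l = j then A$i$j else 0 else 0)"
      by (auto simp: mscale_def Emat_def conj_ite intro!: sum.cong)
    also have "\<dots> = (\<Sum>i\<in>UNIV. if k = i then (\<Sum>j\<in>UNIV. if l = j then A$i$j else 0) else 0)"
      by (rule sum.cong) auto
    also have "\<dots> = A$k$l" by simp
    finally show ?thesis .
  qed
  then show ?thesis by (simp add: vec_eq_iff)
qed

lemma mscale_mult_left: "mscale r (A::'a::comm_ring_1^'n::finite^'m::finite) ** (B::'a^'p::finite^'n) = mscale r (A ** B)"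
  by (simp add: vec_eq_iff mscale_def matrix_matrix_mult_def sum_distrib_left mult.assoc)

lemma mscale_mult_right: "(A::'a::comm_ring_1^'n::finite^'m::finite) ** mscale r (B::'a^'p::finite^'n) = mscale r (A ** B)"
  by (simp add: vec_eq_iff mscale_def matrix_matrix_mult_def sum_distrib_left mult.left_commute)

lemma transpose_mscale: "transpose (mscale r A) = mscale r (transpose A)"
  by (simp add: vec_eq_iff mscale_def transpose_def)

lemma mscale_mscale: "mscale r (mscale s A) = mscale (r * s) (A::'a::comm_ring_1^'n::finite^'m::finite)"
  by (simp add: vec_eq_iff mscale_def mult.assoc)

lemma mscale_one: "mscale 1 A = (A::'a::comm_ring_1^'n::finite^'m::finite)"
  by (simp add: vec_eq_iff mscale_def)

lemma mscale_entry: "mscale r A $ i $ j = r * A $ i $ j"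
  by (simp add: mscale_def)

lemma add_rdistrib: "((A::'a::comm_ring_1^'n::finite^'m::finite) + B) ** (C::'a^'p::finite^'n) = A ** C + B ** C"
  by (simp add: vec_eq_iff matrix_matrix_mult_def distrib_right sum.distrib)

lemma transpose_add: "transpose (A + B) = transpose A + transpose (B::'a::comm_ring_1^'n::finite^'m::finite)"
  by (simp add: vec_eq_iff transpose_def)

lemma sum_mult_right: "(\<Sum>x\<in>S. f x) ** (B::'a::comm_ring_1^'p::finite^'n::finite) = (\<Sum>x\<in>S. (f x :: 'a^'n^'m::finite) ** B)"
proof (cases "finite S")
  case True then show ?thesis by (induction S rule: finite_induct) (auto simp: add_rdistrib)
qed simp

lemma sum_mult_left: "(A::'a::comm_ring_1^'n::finite^'m::finite) ** (\<Sum>x\<in>S. f x) = (\<Sum>x\<in>S. A ** (f x :: 'a^'p::finite^'n))"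
proof (cases "finite S")
  case True then show ?thesis by (induction S rule: finite_induct) (auto simp: matrix_add_ldistrib)
qed simp

lemma additive_sum:
  assumes "\<And>A B. s (A + B) = s A + s B"
  shows "s (\<Sum>x\<in>S. f x) = (\<Sum>x\<in>S. s (f x :: 'b::ab_group_add)) \<and> (s 0 :: 'c::ab_group_add) = 0"
proof -
  have z: "s 0 = 0" using assms[of 0 0] by simp
  show ?thesis
  proof (cases "finite S")
    case True then show ?thesis by (induction S rule: finite_induct) (auto simp: assms z)
  qed (simp add: z)
qed

lemma central_scalar:
  fixes M :: "'a::comm_ring_1^'n::finite^'n"
  assumes "\<And>i j. M ** Emat i j = Emat i j ** M"
  shows "M = mscale (M$i0$i0) (mat 1)"
proof -
  have d: "M$i$i = M$j$j" for i j
    using arg_cong[OF assms[of i j], of "\<lambda>X. X$i$j"] by (simp add: mult_E_entry E_mult_entry)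
  have o: "M$k$i = 0" if "k \<noteq> i" for k i
    using arg_cong[OF assms[of i i], of "\<lambda>X. X$k$i"] that by (simp add: mult_E_entry E_mult_entry)
  show ?thesis
    by (auto simp: vec_eq_iff mscale_def mat_def intro: d o)
qed

lemma inv_unique:
  fixes A :: "'a::comm_ring_1^'n::finite^'n"
  assumes "A ** B = mat 1" "B ** A = mat 1"
  shows "matrix_inv A = B"
proof -
  have "\<exists>A'. A ** A' = mat 1 \<and> A' ** A = mat 1" using assms by blast
  then have s: "A ** matrix_inv A = mat 1 \<and> matrix_inv A ** A = mat 1"
    unfolding matrix_inv_def by (rule someI_ex)
  have "matrix_inv A = matrix_inv A ** (A ** B)" using assms by simp
  also have "\<dots> = B" using s by (simp add: matrix_mul_assoc)
  finally show ?thesis .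
qed

lemma inv_props:
  fixes A :: "'a::comm_ring_1^'n::finite^'n"
  assumes "invertible A"
  shows "A ** matrix_inv A = mat 1 \<and> matrix_inv A ** A = mat 1"
  using assms unfolding invertible_def matrix_inv_def by (rule someI_ex)



lemma backward:
  fixes star :: "'a::comm_ring_1^'n::finite^'n \<Rightarrow> 'a^'n^'n"
  assumes inv: "invertible C" and tC: "transpose C = mscale a C" and aa: "a * a = 1"
    and st: "\<And>A. star A = matrix_inv C ** transpose A ** C"
  shows "is_star_algebra_map star"
proof -
  define Ci where "Ci = matrix_inv C"
  have c1: "C ** Ci = mat 1" and c2: "Ci ** C = mat 1" using inv_props[OF inv] Ci_def by auto
  have r1: "X ** C ** Ci = X" for X :: "'a^'n^'n" by (simp add: c1 flip: matrix_mul_assoc)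
  have r2: "X ** Ci ** C = X" for X :: "'a^'n^'n" by (simp add: c2 flip: matrix_mul_assoc)
  have st': "star A = Ci ** transpose A ** C" for A using st Ci_def by simp
  have "mscale a (transpose Ci ** C) = mat 1"
    using arg_cong[OF c1, of transpose] by (simp add: matrix_transpose_mul tC mscale_mult_right)
  then have "mscale a (transpose Ci ** C) ** Ci = Ci" by simp
  then have "mscale a (transpose Ci) = Ci" by (simp add: mscale_mult_left r1)
  then have tCi: "transpose Ci = mscale a Ci"
    using arg_cong[of _ _ "mscale a"] by (metis aa mscale_mscale mscale_one)
  show ?thesis unfolding is_star_algebra_map_def
  proof (intro conjI allI)
    fix A B show "star (A + B) = star A + star B"
      by (simp add: st' transpose_add matrix_add_ldistrib add_rdistrib)
  next
    fix A B show "star (A ** B) = star B ** star A"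
      by (simp add: st' matrix_transpose_mul matrix_mul_assoc r1)
  next
    show "star (mat 1) = mat 1" by (simp add: st' c2)
  next
    fix r A show "star (mscale r A) = mscale r (star A)"
      by (simp add: st' transpose_mscale mscale_mult_left mscale_mult_right)
  next
    fix A show "star (star A) = A"
      by (simp add: st' matrix_transpose_mul tC tCi mscale_mult_left mscale_mult_right
          mscale_mscale aa mscale_one matrix_mul_assoc c2 r2)
  qed
qed

lemma ent_mult_left:
  fixes A B :: "'a::comm_ring_1^'n::finite^'n"
  assumes "is_ideal m" "\<And>k l. B$k$l \<in> m" shows "(A ** B)$k$l \<in> m"
  unfolding matrix_matrix_mult_def using assms
  by (auto intro!: ideal_sum ideal_lmult)

lemma ent_mult_right:
  fixes A B :: "'a::comm_ring_1^'n::finite^'n"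
  assumes "is_ideal m" "\<And>k l. A$k$l \<in> m" shows "(A ** B)$k$l \<in> m"
  unfolding matrix_matrix_mult_def using assms
  by (auto intro!: ideal_sum ideal_rmult)

lemma forward:
  fixes star :: "'a::comm_ring_1^'n::finite^'n \<Rightarrow> 'a^'n^'n"
  assumes fin: "finite {I::'a set. maximal_ideal I}" and st: "is_star_algebra_map star"
  shows "\<exists>(C :: 'a^'n^'n) (a :: 'a). invertible C \<and> transpose C = mscale a C \<and> a * a = 1 \<and>
        (\<forall>A. star A = matrix_inv C ** transpose A ** C)"
proof -
  have sadd: "star (A + B) = star A + star B"
    and smul: "star (A ** B) = star B ** star A"
    and sone: "star (mat 1) = mat 1"
    and ssc: "star (mscale r A) = mscale r (star A)"
    and sinv: "star (star A) = A" for A B r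
    using st unfolding is_star_algebra_map_def by auto
  define \<phi> where "\<phi> A = transpose (star A)" for A
  have padd: "\<phi> (A + B) = \<phi> A + \<phi> B" for A B by (simp add: \<phi>_def sadd transpose_add)
  have pmul: "\<phi> (A ** B) = \<phi> A ** \<phi> B" for A B by (simp add: \<phi>_def smul matrix_transpose_mul)
  have pone: "\<phi> (mat 1) = mat 1" by (simp add: \<phi>_def sone)
  have psc: "\<phi> (mscale r A) = mscale r (\<phi> A)" for r A by (simp add: \<phi>_def ssc transpose_mscale)
  have psum: "\<phi> (\<Sum>x\<in>S. f x) = (\<Sum>x\<in>S. \<phi> (f x))" and p0: "\<phi> 0 = 0" for S and f :: "'b \<Rightarrow> 'a^'n^'n"
    using additive_sum[of \<phi> f S, OF padd] by auto
  have psurj: "\<phi> (star (transpose A)) = A" for A by (simp add: \<phi>_def sinv)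
  define F where "F i j = \<phi> (Emat i j)" for i j
  have plin: "\<phi> A = (\<Sum>i\<in>UNIV. \<Sum>j\<in>UNIV. mscale (A$i$j) (F i j))" for A
  proof -
    have "\<phi> A = \<phi> (\<Sum>i\<in>UNIV. \<Sum>j\<in>UNIV. mscale (A$i$j) (Emat i j))"
      using decomp[of A] by metis
    then show ?thesis by (simp add: psum psc F_def)
  qed
  have FF: "F i j ** F k l = (if j = k then F i l else 0)" for i j k l
    by (simp add: F_def flip: pmul) (simp add: E_E p0)
  have Fsum: "(\<Sum>i\<in>UNIV. F i i) = mat 1"
    using pone by (simp add: mat1_E psum F_def)
  define i0 where "i0 = (undefined::'n)"
  define G where "G = F i0 i0"
  have GG: "G ** G = G" by (simp add: G_def FF)
  have ent: "\<exists>k l. G$k$l \<notin> m" if m: "maximal_ideal m" for m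
  proof (rule ccontr)
    assume "\<not> (\<exists>k l. G$k$l \<notin> m)"
    then have all: "\<And>k l. G$k$l \<in> m" by blast
    have im: "is_ideal m" using m maximal_ideal_def by blast
    have Fjj: "F j j = F j i0 ** G ** F i0 j" for j by (simp add: G_def FF)
    have "(F j j)$k$l \<in> m" for j k l
      unfolding Fjj by (intro ent_mult_right[OF im] ent_mult_left[OF im] all)
    then have "(\<Sum>i\<in>UNIV. F i i)$i0$i0 \<in> m" by (auto intro!: ideal_sum[OF im])
    then have "(1::'a) \<in> m" by (simp add: Fsum mat_def)
    then show False using max_one[OF m] by blast
  qed
  obtain y0 u0 :: "'a^'n" where yu: "(\<Sum>k\<in>UNIV. y0$k * (G *v u0)$k) = 1"
    using key_unit[OF fin ent] by blast
  define dot :: "'a^'n \<Rightarrow> 'a^'n \<Rightarrow> 'a" where "dot x z = (\<Sum>k\<in>UNIV. x$k * z$k)" for x z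
  have dotA: "dot (x v* A) z = dot x (A *v z)" for x z and A :: "'a^'n^'n"
  proof -
    have "dot (x v* A) z = (\<Sum>k\<in>UNIV. \<Sum>i\<in>UNIV. x$i * A$i$k * z$k)"
      by (simp add: dot_def vector_matrix_mult_def sum_distrib_right)
    also have "\<dots> = (\<Sum>i\<in>UNIV. \<Sum>k\<in>UNIV. x$i * A$i$k * z$k)" by (rule sum.swap)
    also have "\<dots> = dot x (A *v z)"
      by (simp add: dot_def matrix_vector_mult_def sum_distrib_left mult.assoc)
    finally show ?thesis .
  qed
  define w where "w = G *v u0"
  define yv where "yv = y0 v* G"
  have Gw: "G *v w = w" by (simp add: w_def matrix_vector_mul_assoc GG)
  have yw: "dot yv w = 1"
  proof -
    have "dot yv w = dot y0 (G *v w)" by (simp add: yv_def dotA)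
    also have "\<dots> = dot y0 w" by (simp only: Gw)
    also have "\<dots> = 1" using yu by (simp add: dot_def w_def)
    finally show ?thesis .
  qed
  define P :: "'a^'n^'n" where "P = (\<chi> k j. (F j i0 *v w)$k)"
  define Q :: "'a^'n^'n" where "Q = (\<chi> k l. (yv v* F i0 k)$l)"
  have XP: "(X ** P)$k$l = ((X ** F l i0) *v w)$k" for X k l
  proof -
    have "(X ** P)$k$l = (X *v (F l i0 *v w))$k"
      by (simp add: matrix_matrix_mult_def P_def matrix_vector_mult_def)
    then show ?thesis by (simp add: matrix_vector_mul_assoc)
  qed
  have QX: "(Q ** X)$k$l = (yv v* (F i0 k ** X))$l" for X k l
  proof -
    have "(Q ** X)$k$l = ((yv v* F i0 k) v* X)$l"
      by (simp add: matrix_matrix_mult_def Q_def vector_matrix_mult_def)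
    then show ?thesis by (simp add: vector_matrix_mul_assoc)
  qed
  have QP: "Q ** P = mat 1"
  proof -
    have "(Q ** P)$k$l = (mat 1 :: 'a^'n^'n)$k$l" for k l
    proof -
      have "(Q ** P)$k$l = dot (yv v* F i0 k) (F l i0 *v w)"
        by (simp add: matrix_matrix_mult_def Q_def P_def dot_def)
      also have "\<dots> = dot yv ((F i0 k ** F l i0) *v w)" by (simp add: dotA matrix_vector_mul_assoc)
      also have "\<dots> = (mat 1 :: 'a^'n^'n)$k$l"
        using yw Gw by (simp add: FF mat_def G_def dot_def)
      finally show ?thesis .
    qed
    then show ?thesis by (simp add: vec_eq_iff)
  qed
  have PE: "P ** Emat i j = F i j ** P" for i j
  proof -
    have "(P ** Emat i j)$k$l = (F i j ** P)$k$l" for k l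
      by (simp add: mult_E_entry XP FF) (simp add: P_def)
    then show ?thesis by (simp add: vec_eq_iff)
  qed
  have QF: "Q ** F i j = Emat i j ** Q" for i j
  proof -
    have "(Q ** F i j)$k$l = (Emat i j ** Q)$k$l" for k l
      by (simp add: E_mult_entry QX FF) (simp add: Q_def)
    then show ?thesis by (simp add: vec_eq_iff)
  qed
  have Pphi: "\<phi> A ** P = P ** A" for A
  proof -
    have "\<phi> A ** P = (\<Sum>i\<in>UNIV. \<Sum>j\<in>UNIV. mscale (A$i$j) (F i j ** P))"
      by (simp add: plin sum_mult_right mscale_mult_left)
    also have "\<dots> = (\<Sum>i\<in>UNIV. \<Sum>j\<in>UNIV. mscale (A$i$j) (P ** Emat i j))"
      by (simp add: PE)
    also have "\<dots> = P ** (\<Sum>i\<in>UNIV. \<Sum>j\<in>UNIV. mscale (A$i$j) (Emat i j))"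
      by (simp add: sum_mult_left mscale_mult_right)
    also have "\<dots> = P ** A" using decomp[of A] by metis
    finally show ?thesis .
  qed
  have Qphi: "Q ** \<phi> A = A ** Q" for A
  proof -
    have "Q ** \<phi> A = (\<Sum>i\<in>UNIV. \<Sum>j\<in>UNIV. mscale (A$i$j) (Q ** F i j))"
      by (simp add: plin sum_mult_left mscale_mult_right)
    also have "\<dots> = (\<Sum>i\<in>UNIV. \<Sum>j\<in>UNIV. mscale (A$i$j) (Emat i j ** Q))"
      by (simp add: QF)
    also have "\<dots> = (\<Sum>i\<in>UNIV. \<Sum>j\<in>UNIV. mscale (A$i$j) (Emat i j)) ** Q"
      by (simp add: sum_mult_right mscale_mult_left)
    also have "\<dots> = A ** Q" using decomp[of A] by metis
    finally show ?thesis .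
  qed
  have PQcomm: "(P ** Q) ** A = A ** (P ** Q)" for A
  proof -
    obtain B where B: "A = \<phi> B" using psurj by metis
    have "(P ** Q) ** \<phi> B = P ** (B ** Q)" by (simp add: Qphi flip: matrix_mul_assoc)
    also have "\<dots> = \<phi> B ** (P ** Q)" by (simp add: Pphi matrix_mul_assoc)
    finally show ?thesis using B by simp
  qed
  define c where "c = (P ** Q)$i0$i0"
  have PQs: "P ** Q = mscale c (mat 1)"
    unfolding c_def by (rule central_scalar) (simp add: PQcomm)
  have "Q ** (P ** Q) ** P = (Q ** P) ** (Q ** P)" by (simp add: matrix_mul_assoc)
  then have "mscale c (mat 1) = (mat 1 :: 'a^'n^'n)"
    by (simp add: PQs QP mscale_mult_left mscale_mult_right)
  then have PQ: "P ** Q = mat 1" using PQs by simp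
  have phiA: "\<phi> A = P ** A ** Q" for A
  proof -
    have "\<phi> A = \<phi> A ** (P ** Q)" by (simp add: PQ)
    also have "\<dots> = P ** A ** Q" by (simp add: matrix_mul_assoc Pphi)
    finally show ?thesis .
  qed
  define C where "C = transpose P"
  define Ci where "Ci = transpose Q"
  have CCi: "C ** Ci = mat 1" unfolding C_def Ci_def by (metis QP matrix_transpose_mul transpose_mat)
  have CiC: "Ci ** C = mat 1" unfolding C_def Ci_def by (metis PQ matrix_transpose_mul transpose_mat)
  have invC: "invertible C" unfolding invertible_def using CCi CiC by blast
  have mi: "matrix_inv C = Ci" by (rule inv_unique[OF CCi CiC])
  have starA: "star A = Ci ** transpose A ** C" for A
  proof -
    have "star A = transpose (\<phi> A)" by (simp add: \<phi>_def)
    then show ?thesis by (simp add: phiA matrix_transpose_mul C_def Ci_def matrix_mul_assoc)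
  qed
  define X where "X = Ci ** P"
  define Y where "Y = Q ** C"
  have XAY: "X ** A ** Y = A" for A
  proof -
    have "star (star A) = Ci ** P ** A ** Q ** C"
      by (simp add: starA matrix_transpose_mul C_def Ci_def matrix_mul_assoc)
    then show ?thesis using sinv[of A] by (simp add: X_def Y_def matrix_mul_assoc)
  qed
  have YX: "Y ** X = mat 1"
  proof -
    have "Y ** X = Q ** (C ** Ci) ** P" by (simp add: X_def Y_def matrix_mul_assoc)
    then show ?thesis by (simp add: CCi QP)
  qed
  have Xc: "X ** A = A ** X" for A
  proof -
    have "X ** A = X ** A ** (Y ** X)" by (simp add: YX)
    also have "\<dots> = (X ** A ** Y) ** X" by (simp add: matrix_mul_assoc)
    finally show ?thesis by (simp add: XAY)
  qed
  define a where "a = X$i0$i0"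
  have Xs: "X = mscale a (mat 1)" unfolding a_def by (rule central_scalar) (simp add: Xc)
  have CX: "C ** X = P" by (simp add: X_def matrix_mul_assoc CCi)
  have tC: "transpose C = mscale a C"
  proof -
    have "transpose C = P" by (simp add: C_def)
    also have "\<dots> = C ** X" by (simp add: CX)
    also have "\<dots> = mscale a C" by (simp add: Xs mscale_mult_right)
    finally show ?thesis .
  qed
  have "C = mscale (a * a) C"
  proof -
    have "C = transpose P" by (simp add: C_def)
    also have "P = mscale a C" using tC C_def by simp
    finally show ?thesis by (simp add: transpose_mscale tC mscale_mscale)
  qed
  then have "Ci ** C = mscale (a * a) (Ci ** C)" by (metis mscale_mult_right)
  then have "(mat 1 :: 'a^'n^'n) = mscale (a * a) (mat 1)" by (simp add: CiC)
  then have "(mat 1 :: 'a^'n^'n)$i0$i0 = (mscale (a * a) (mat 1) :: 'a^'n^'n)$i0$i0" by simp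
  then have aa: "a * a = 1" by (simp add: mscale_entry mat_def)
  show ?thesis using invC tC aa starA mi by metis
qed


theorem proposition3p1:
  fixes star :: "'a::comm_ring_1^'n::finite^'n \<Rightarrow> 'a^'n^'n"
  assumes "noetherian_cring TYPE('a)"
      and "semilocal_cring TYPE('a)"
  shows "is_star_algebra_map star \<longleftrightarrow>
    (\<exists>(C :: 'a^'n^'n) (a :: 'a). invertible C \<and> transpose C = mscale a C \<and> a * a = 1 \<and>
        (\<forall>A. star A = matrix_inv C ** transpose A ** C))"
proof
  have fin: "finite {I::'a set. maximal_ideal I}" using assms(2) unfolding semilocal_cring_def by simp
  assume "is_star_algebra_map star"
  then show "\<exists>(C :: 'a^'n^'n) (a :: 'a). invertible C \<and> transpose C = mscale a C \<and> a * a = 1 \<and>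
        (\<forall>A. star A = matrix_inv C ** transpose A ** C)" by (rule forward[OF fin])
next
  assume "\<exists>(C :: 'a^'n^'n) (a :: 'a). invertible C \<and> transpose C = mscale a C \<and> a * a = 1 \<and>
        (\<forall>A. star A = matrix_inv C ** transpose A ** C)"
  then show "is_star_algebra_map star" using backward by metis
qed

end
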